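(* For every $\alpha\in\mathbb{R}$, $t>0$ and $x\in\mathbb{R}$, $$\mathcal{H}_\alpha(x,t)=\mathscr{A}_{W_t}\{y^\alpha\}(x)=\left\langle \mathcal{L}^{-1}\{y^\alpha\}(u),\,e^{-ux-\frac{u^2}{2}t}\right\rangle .$$
   Context: $U(a,z)$ is the standard (Whittaker) parabolic cylinder function, $D_\nu(z)=U(-\nu-\tfrac12,z)$, and $\mathcal{H}_\alpha(x,t)=t^{\frac{\alpha}{2}}e^{\frac{x^2}{4t}}U(-\alpha-\tfrac12,\tfrac{x}{\sqrt t})$. $W$ is a Wiener process, so $\mathbf{E}e^{-uW_t}=e^{\frac{u^2}{2}t}$, and the Appell integral transform with respect to $W$ is $\mathscr{A}_{W_t}\{G\}(x)=\langle \mathcal{L}^{-1}G(u),e^{-ux-\frac{u^2}{2}t}\rangle$, where $\mathcal{L}^{-1}G$ is the generalised function supported on $[0,\infty)$ whose (distributional) Laplace transform $\langle \mathcal{L}^{-1}G(u),e^{-su}\rangle$ equals $G(s)$. Concretely, for $G(y)=y^\alpha$: if $\alpha<0$, $\mathcal{L}^{-1}\{y^\alpha\}(u)=\frac{u^{-\alpha-1}}{\Gamma(-\alpha)}$ for $u>0$ and $0$ for $u<0$; if $\alpha=n\in\mathbb{N}\cup\{0\}$, $\mathcal{L}^{-1}\{y^n\}=\delta^{(n)}$; if $\alpha>0$ is not an integer, $\mathcal{L}^{-1}\{y^\alpha\}={}^C\mathcal{D}^\alpha_{0+}\delta$, the Caputo fractional derivative of order $\alpha$ of the Dirac delta. *)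

theory Defs
  imports "HOL-Analysis.Analysis"
begin

definition kummerM :: "real \<Rightarrow> real \<Rightarrow> real \<Rightarrow> real" where
  "kummerM a b z = (\<Sum>k. pochhammer a k / pochhammer b k * z ^ k / fact k)"

text \<open>Whittaker's parabolic cylinder function U(a,z) for real a, z,
  via DLMF 12.4.1, 12.2.6, 12.2.7, 12.7.12, 12.7.13 (1/Gamma written as rGamma).\<close>
definition pcfU :: "real \<Rightarrow> real \<Rightarrow> real" where
  "pcfU a z =
     sqrt pi * rGamma (3/4 + a/2) / 2 powr (a/2 + 1/4)
       * (exp (-(z^2) / 4) * kummerM (a/2 + 1/4) (1/2) (z^2/2))
   - sqrt pi * rGamma (1/4 + a/2) / 2 powr (a/2 - 1/4)
       * (z * exp (-(z^2) / 4) * kummerM (a/2 + 3/4) (3/2) (z^2/2))"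

definition calH :: "real \<Rightarrow> real \<Rightarrow> real \<Rightarrow> real" where
  "calH \<alpha> x t = t powr (\<alpha>/2) * exp (x^2 / (4*t)) * pcfU (-\<alpha> - 1/2) (x / sqrt t)"

text \<open>The action of the generalised function \<open>\<L>\<^sup>-\<^sup>1{y^\<alpha>}\<close> on a function \<open>\<phi>\<close>:
  for \<alpha> < 0 the locally integrable function u^(-\<alpha>-1)/Gamma(-\<alpha>) on (0,\<infinity>);
  for \<alpha> = n \<in> \<nat> the distribution \<delta>^(n), i.e. (-1)^n \<phi>^(n)(0);
  for non-integer \<alpha> > 0 the Caputo derivative of \<delta> of order \<alpha>, acting by transposition:
  <D^\<alpha> \<delta>, \<phi>> = (-1)^n/Gamma(n-\<alpha>) * int_0^\<infinity> u^(n-\<alpha>-1) \<phi>^(n)(u) du with n = ceiling \<alpha>.\<close>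
definition inv_laplace_pow_pair :: "real \<Rightarrow> (real \<Rightarrow> real) \<Rightarrow> real" where
  "inv_laplace_pow_pair \<alpha> \<phi> =
    (if \<alpha> < 0 then (LBINT u:{0<..}. u powr (-\<alpha> - 1) * \<phi> u) / Gamma (-\<alpha>)
     else if \<alpha> \<in> \<nat> then (-1) ^ nat \<lfloor>\<alpha>\<rfloor> * (deriv ^^ nat \<lfloor>\<alpha>\<rfloor>) \<phi> 0
     else (let n = nat \<lceil>\<alpha>\<rceil> in
            (-1) ^ n / Gamma (real n - \<alpha>)
              * (LBINT u:{0<..}. u powr (real n - \<alpha> - 1) * (deriv ^^ n) \<phi> u)))"

definition appell_W_pow :: "real \<Rightarrow> real \<Rightarrow> real \<Rightarrow> real" where
  "appell_W_pow \<alpha> t x = inv_laplace_pow_pair \<alpha> (\<lambda>u. exp (- u * x - u^2 / 2 * t))"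

end

theory Submission
  imports Defs "HOL-Computational_Algebra.Polynomial"
begin

lemma poch_half_fact: "pochhammer (1/2::real) m * fact m * 4^m = fact (2*m)"
proof (induction m)
  case (Suc m)
  have "pochhammer (1/2::real) (Suc m) * fact (Suc m) * 4^(Suc m)
      = (pochhammer (1/2) m * fact m * 4^m) * ((1/2 + m) * (m+1) * 4)"
    by (simp add: pochhammer_rec' algebra_simps)
  also have "\<dots> = fact (2*m) * ((2*m+1)*(2*m+2))" using Suc by (simp add: algebra_simps)
  also have "\<dots> = fact (2 * Suc m)"
    by (simp add: algebra_simps)
  finally show ?case .
qed simp

lemma poch_3half_fact: "pochhammer (3/2::real) m * fact m * 4^m = fact (2*m+1)"
proof (induction m)
  case (Suc m)
  have "pochhammer (3/2::real) (Suc m) * fact (Suc m) * 4^(Suc m)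
      = (pochhammer (3/2) m * fact m * 4^m) * ((3/2 + m) * (m+1) * 4)"
    by (simp add: pochhammer_rec' algebra_simps)
  also have "\<dots> = fact (2*m+1) * ((2*m+2)*(2*m+3))" unfolding Suc.IH by (simp add: field_simps)
  also have "\<dots> = fact (2 * Suc m + 1)"
    by (simp add: algebra_simps)
  finally show ?case .
qed simp


lemma kummer_summable:
  fixes a b z :: real
  assumes b: "b > 0"
  shows "summable (\<lambda>k. pochhammer a k / pochhammer b k * z^k / fact k)"
proof (rule summable_ratio_test[where c="1/2" and N="nat \<lceil>2 * ((\<bar>a\<bar>/b + 1) * \<bar>z\<bar>)\<rceil>"])
  fix n :: nat
  assume n: "n \<ge> nat \<lceil>2 * ((\<bar>a\<bar>/b + 1) * \<bar>z\<bar>)\<rceil>"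
  define K where "K = (\<bar>a\<bar>/b + 1) * \<bar>z\<bar>"
  have K0: "K \<ge> 0" using b by (simp add: K_def)
  have nK: "2*K \<le> real n + 1" using n unfolding K_def by linarith
  have pb: "pochhammer b n > 0" using b by (simp add: pochhammer_pos)
  have bn: "b + real n > 0" using b by simp
  have an: "\<bar>a + real n\<bar> \<le> (\<bar>a\<bar>/b + 1) * (b + real n)"
  proof -
    have "\<bar>a\<bar> \<le> (\<bar>a\<bar>/b) * (b + real n)"
      using b by (simp add: field_simps)
    moreover have "(\<bar>a\<bar>/b + 1) * (b + real n) = (\<bar>a\<bar>/b) * (b + real n) + (b + real n)"
      by (simp add: algebra_simps)
    moreover have "\<bar>a + real n\<bar> \<le> \<bar>a\<bar> + real n" by simp
    ultimately show ?thesis using b by linarith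
  qed
  have "norm (pochhammer a (Suc n) / pochhammer b (Suc n) * z^(Suc n) / fact (Suc n))
     = norm (pochhammer a n / pochhammer b n * z^n / fact n) * (\<bar>a + real n\<bar> / (b + real n) * \<bar>z\<bar> / (real n + 1))"
  proof -
    have eq: "pochhammer a (Suc n) / pochhammer b (Suc n) * z^(Suc n) / fact (Suc n)
      = (pochhammer a n / pochhammer b n * z^n / fact n) * ((a + real n)/(b + real n) * z / (real n + 1))"
      using pb bn by (simp add: pochhammer_rec' field_simps)
    show ?thesis unfolding eq norm_mult real_norm_def using bn
      by (simp add: abs_mult abs_divide)
  qed
  also have "\<bar>a + real n\<bar> / (b + real n) * \<bar>z\<bar> / (real n + 1) \<le> 1/2"
  proof -
    have "\<bar>a + real n\<bar> / (b + real n) \<le> \<bar>a\<bar>/b + 1"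
      using an bn by (simp add: divide_le_eq)
    hence "\<bar>a + real n\<bar> / (b + real n) * \<bar>z\<bar> \<le> K"
      unfolding K_def by (intro mult_right_mono) auto
    hence "\<bar>a + real n\<bar> / (b + real n) * \<bar>z\<bar> / (real n + 1) \<le> K / (real n + 1)"
      by (intro divide_right_mono) auto
    also have "\<dots> \<le> 1/2" using nK K0 by (simp add: divide_le_eq)
    finally show ?thesis .
  qed
  hence "norm (pochhammer a n / pochhammer b n * z^n / fact n) * (\<bar>a + real n\<bar> / (b + real n) * \<bar>z\<bar> / (real n + 1))
      \<le> norm (pochhammer a n / pochhammer b n * z^n / fact n) * (1/2)"
    by (intro mult_left_mono) auto
  finally show "norm (pochhammer a (Suc n) / pochhammer b (Suc n) * z^(Suc n) / fact (Suc n))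
      \<le> 1/2 * norm (pochhammer a n / pochhammer b n * z^n / fact n)" by simp
qed simp


definition Acoef :: "real \<Rightarrow> real" where
  "Acoef \<alpha> = sqrt pi * 2 powr (\<alpha>/2) * rGamma ((1-\<alpha>)/2)"
definition Bcoef :: "real \<Rightarrow> real" where
  "Bcoef \<alpha> = - sqrt pi * 2 powr ((\<alpha>+1)/2) * rGamma (-\<alpha>/2)"
definition hc :: "real \<Rightarrow> real \<Rightarrow> nat \<Rightarrow> real" where
  "hc \<alpha> t k = (if even k then Acoef \<alpha> * pochhammer (-\<alpha>/2) (k div 2) * 2^(k div 2)
        * t powr (\<alpha>/2 - real (k div 2)) / fact k
     else Bcoef \<alpha> * pochhammer ((1-\<alpha>)/2) (k div 2) * 2^(k div 2)
        * t powr ((\<alpha>-1)/2 - real (k div 2)) / fact k)"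

lemma sums_even_odd:
  fixes f :: "nat \<Rightarrow> real"
  assumes "(\<lambda>m. f (2*m)) sums A" "(\<lambda>m. f (2*m+1)) sums B"
  shows "f sums (A + B)"
proof -
  define fe where "fe k = (if even k then f k else 0)" for k
  define fo where "fo k = (if odd k then f k else 0)" for k
  have "(\<lambda>m. fe (2*m)) sums A" using assms(1) by (simp add: fe_def)
  hence 1: "fe sums A"
    by (subst (asm) sums_mono_reindex) (auto simp: strict_mono_def fe_def elim!: evenE)
  have "(\<lambda>m. fo (2*m+1)) sums B" using assms(2) by (simp add: fo_def)
  hence 2: "fo sums B"
    by (subst (asm) sums_mono_reindex) (auto simp: strict_mono_def fo_def elim!: oddE)
  have "f = (\<lambda>k. fe k + fo k)" by (auto simp: fe_def fo_def)
  thus ?thesis using sums_add[OF 1 2] by simp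
qed

lemma calH_series:
  fixes \<alpha> t x :: real
  assumes t: "t > 0"
  shows "(\<lambda>k. hc \<alpha> t k * x^k) sums calH \<alpha> x t"
proof -
  define M1 where "M1 = kummerM (-\<alpha>/2) (1/2) (x^2/(2*t))"
  define M2 where "M2 = kummerM ((1-\<alpha>)/2) (3/2) (x^2/(2*t))"
  have st: "sqrt t > 0" using t by simp
  have z2: "(x / sqrt t)^2 = x^2/t" using t by (simp add: power_divide)
  have e: "exp (x^2 / (4*t)) * exp (-((x / sqrt t)^2) / 4) = 1"
    unfolding z2 by (simp add: exp_minus[symmetric] exp_add[symmetric] field_simps)
  have r1: "3/4 + (-\<alpha> - 1/2)/2 = (1-\<alpha>)/2" "(-\<alpha> - 1/2)/2 + 1/4 = -\<alpha>/2"
    "1/4 + (-\<alpha> - 1/2)/2 = -\<alpha>/2" "(-\<alpha> - 1/2)/2 - 1/4 = -(\<alpha>+1)/2"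
    "(-\<alpha> - 1/2)/2 + 3/4 = (1-\<alpha>)/2" by (simp_all add: field_simps)
  have z22: "(x / sqrt t)^2 / 2 = x^2/(2*t)" using z2 by simp
  have H: "calH \<alpha> x t = t powr (\<alpha>/2) * Acoef \<alpha> * M1 + t powr (\<alpha>/2) * Bcoef \<alpha> / sqrt t * x * M2"
  proof -
    have "calH \<alpha> x t = t powr (\<alpha>/2) * (exp (x^2 / (4*t)) * exp (-((x / sqrt t)^2) / 4)) *
       (sqrt pi * rGamma ((1-\<alpha>)/2) / 2 powr (-\<alpha>/2) * M1
        - sqrt pi * rGamma (-\<alpha>/2) / 2 powr (-(\<alpha>+1)/2) * (x / sqrt t) * M2)"
      unfolding calH_def pcfU_def r1 z22 M1_def M2_def by (simp add: algebra_simps)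
    also have "\<dots> = t powr (\<alpha>/2) * Acoef \<alpha> * M1 + t powr (\<alpha>/2) * Bcoef \<alpha> / sqrt t * x * M2"
    proof -
      have p1: "(2::real) powr (-\<alpha>/2) = inverse (2 powr (\<alpha>/2))"
        using powr_minus[of 2 "\<alpha>/2"] by simp
      have p2: "(2::real) powr (-(\<alpha>+1)/2) = inverse (2 powr ((\<alpha>+1)/2))"
        using powr_minus[of 2 "(\<alpha>+1)/2"] by (simp add: minus_divide_left)
      show ?thesis unfolding e Acoef_def Bcoef_def p1 p2
        by (simp add: field_simps)
    qed
    finally show ?thesis .
  qed
  have S1: "(\<lambda>m. pochhammer (-\<alpha>/2) m / pochhammer (1/2) m * (x^2/(2*t))^m / fact m) sums M1"
    unfolding M1_def kummerM_def by (rule summable_sums, rule kummer_summable) simp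
  have S2: "(\<lambda>m. pochhammer ((1-\<alpha>)/2) m / pochhammer (3/2) m * (x^2/(2*t))^m / fact m) sums M2"
    unfolding M2_def kummerM_def by (rule summable_sums, rule kummer_summable) simp
  have E: "(\<lambda>m. hc \<alpha> t (2*m) * x^(2*m)) sums (t powr (\<alpha>/2) * Acoef \<alpha> * M1)"
  proof -
    have "(\<lambda>m. t powr (\<alpha>/2) * Acoef \<alpha> * (pochhammer (-\<alpha>/2) m / pochhammer (1/2) m * (x^2/(2*t))^m / fact m))
       sums (t powr (\<alpha>/2) * Acoef \<alpha> * M1)" by (rule sums_mult[OF S1])
    moreover have "t powr (\<alpha>/2) * Acoef \<alpha> * (pochhammer (-\<alpha>/2) m / pochhammer (1/2) m * (x^2/(2*t))^m / fact m)
       = hc \<alpha> t (2*m) * x^(2*m)" for m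
    proof -
      have p: "pochhammer (1/2::real) m * fact m = fact (2*m) / 4^m"
        using poch_half_fact[of m] by (simp add: field_simps)
      have p0: "pochhammer (1/2::real) m \<noteq> 0" by (simp add: pochhammer_eq_0_iff)
      have tp: "t powr (\<alpha>/2 - real m) = t powr (\<alpha>/2) / t^m"
        using t by (simp add: powr_diff powr_realpow)
      have "pochhammer (-\<alpha>/2) m / pochhammer (1/2) m * (x^2/(2*t))^m / fact m
          = pochhammer (-\<alpha>/2) m * (x^2/(2*t))^m / (pochhammer (1/2) m * fact m)" by simp
      also have "\<dots> = pochhammer (-\<alpha>/2) m * 2^m * x^(2*m) / t^m / fact (2*m)"
      proof -
        have q: "(x^2/(2*t))^m = x^(2*m) / (2^m * t^m)"
          by (simp add: power_divide power_mult_distrib power_mult)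
        have f: "(4::real)^m = 2^m * 2^m" by (simp flip: power_mult_distrib)
        show ?thesis unfolding q p f using t by (simp add: field_simps)
      qed
      finally show ?thesis unfolding hc_def by (simp add: tp)
    qed
    ultimately show ?thesis by simp
  qed
  have O: "(\<lambda>m. hc \<alpha> t (2*m+1) * x^(2*m+1)) sums (t powr (\<alpha>/2) * Bcoef \<alpha> / sqrt t * x * M2)"
  proof -
    have "(\<lambda>m. t powr (\<alpha>/2) * Bcoef \<alpha> / sqrt t * x * (pochhammer ((1-\<alpha>)/2) m / pochhammer (3/2) m * (x^2/(2*t))^m / fact m))
       sums (t powr (\<alpha>/2) * Bcoef \<alpha> / sqrt t * x * M2)" by (rule sums_mult[OF S2])
    moreover have "t powr (\<alpha>/2) * Bcoef \<alpha> / sqrt t * x * (pochhammer ((1-\<alpha>)/2) m / pochhammer (3/2) m * (x^2/(2*t))^m / fact m)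
       = hc \<alpha> t (2*m+1) * x^(2*m+1)" for m
    proof -
      have p: "pochhammer (3/2::real) m * fact m = fact (2*m+1) / 4^m"
        using poch_3half_fact[of m] by (simp add: field_simps)
      have tp: "t powr ((\<alpha>-1)/2 - real m) = t powr (\<alpha>/2) / sqrt t / t^m"
        using t by (simp add: powr_diff powr_realpow sqrt_def[symmetric] powr_half_sqrt diff_divide_distrib)
      have "pochhammer ((1-\<alpha>)/2) m / pochhammer (3/2) m * (x^2/(2*t))^m / fact m
          = pochhammer ((1-\<alpha>)/2) m * (x^2/(2*t))^m / (pochhammer (3/2) m * fact m)" by simp
      also have "\<dots> = pochhammer ((1-\<alpha>)/2) m * 2^m * x^(2*m) / t^m / fact (2*m+1)"
      proof -
        have q: "(x^2/(2*t))^m = x^(2*m) / (2^m * t^m)"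
          by (simp add: power_divide power_mult_distrib power_mult)
        have f: "(4::real)^m = 2^m * 2^m" by (simp flip: power_mult_distrib)
        show ?thesis unfolding q p f using t by (simp add: field_simps)
      qed
      finally have "pochhammer ((1-\<alpha>)/2) m / pochhammer (3/2) m * (x^2/(2*t))^m / fact m
          = pochhammer ((1-\<alpha>)/2) m * 2^m * x^(2*m) / t^m / fact (2*m+1)" .
      moreover have "hc \<alpha> t (2*m+1) = Bcoef \<alpha> * pochhammer ((1-\<alpha>)/2) m * 2^m
          * t powr ((\<alpha>-1)/2 - real m) / fact (2*m+1)" by (simp add: hc_def)
      ultimately show ?thesis unfolding tp by (simp add: ac_simps)
    qed
    ultimately show ?thesis by simp
  qed
  show ?thesis unfolding H by (rule sums_even_odd[OF E O])
qed


lemma hcE: "t > 0 \<Longrightarrow> hc \<alpha> t (2*m) =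
   Acoef \<alpha> * pochhammer (-\<alpha>/2) m * 2^m * t powr (\<alpha>/2) / (t^m * fact (2*m))"
  by (simp add: hc_def powr_diff powr_realpow)

lemma hcO: "t > 0 \<Longrightarrow> hc \<alpha> t (2*m+1) =
   Bcoef \<alpha> * pochhammer ((1-\<alpha>)/2) m * 2^m * t powr (\<alpha>/2) / (sqrt t * t^m * fact (2*m+1))"
proof -
  assume t: "t > 0"
  have "t powr ((\<alpha>-1)/2 - real m) = t powr (\<alpha>/2) / sqrt t / t^m"
    using t by (simp add: powr_diff powr_realpow powr_half_sqrt[symmetric] diff_divide_distrib)
  thus ?thesis by (simp add: hc_def field_simps)
qed

lemma Bcoef_minus1: "Bcoef (\<alpha> - 1) = - Acoef \<alpha>"
proof -
  have "-(\<alpha>-1)/2 = (1-\<alpha>)/2" "(\<alpha> - 1 + 1)/2 = \<alpha>/2" by (simp_all add: field_simps)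
  thus ?thesis unfolding Bcoef_def Acoef_def by simp
qed

lemma Acoef_minus1: "\<alpha> * Acoef (\<alpha> - 1) = Bcoef \<alpha>"
proof -
  have r: "rGamma (-\<alpha>/2) = (-\<alpha>/2) * rGamma (-\<alpha>/2 + 1)" by (metis rGamma_plus1)
  have a: "(1 - (\<alpha> - 1))/2 = -\<alpha>/2 + 1" by (simp add: field_simps)
  have p: "(2::real) powr ((\<alpha>+1)/2) = 2 * 2 powr ((\<alpha>-1)/2)"
  proof -
    have "(2::real) powr ((\<alpha>+1)/2) = 2 powr (1 + (\<alpha>-1)/2)"
      by (rule arg_cong[where f="\<lambda>x. (2::real) powr x"]) (simp add: field_simps)
    thus ?thesis by (simp add: powr_add)
  qed
  show ?thesis unfolding Bcoef_def Acoef_def a p r by (simp add: field_simps)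
qed

lemma cancel_aux: "(a::real) \<noteq> 0 \<Longrightarrow> t \<noteq> 0 \<Longrightarrow> t * (a * (N / (t * T * (a * F)))) = N / (T * F)"
  by (simp add: field_simps)

lemma aux2: "(d::real) \<noteq> 0 \<Longrightarrow> e \<noteq> 0 \<Longrightarrow> F \<noteq> 0 \<Longrightarrow> e = 2*j+2 \<Longrightarrow>
   A*((c-1)*p)*(2*q)*P/(d*(e*F)) = -A*p*q*P/(d*F) + A*(p*(c+j))*(2*q)*P/(d*(e*F))"
proof -
  assume h: "d \<noteq> 0" "e \<noteq> 0" "F \<noteq> 0" "e = 2*j+2"
  hence j: "j = (e-2)/2" by simp
  show ?thesis unfolding j using h(1-3) by (simp add: field_simps)
qed

lemma aux3: "(s::real) \<noteq> 0 \<Longrightarrow> T \<noteq> 0 \<Longrightarrow> F \<noteq> 0 \<Longrightarrow> e \<noteq> 0 \<Longrightarrow> e = 2*m+1 \<Longrightarrow> G = e*F \<Longrightarrow> c = (1-\<alpha>)/2 \<Longrightarrow>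
  \<alpha>*A*p*q*P/(s*T*G) = (if k = 0 then 0 else A*p*q*P/(s*T*F)) - A*(p*(c+m))*(2*q)*P/(s*T*G)" if "k \<noteq> 0"
proof -
  assume h: "s \<noteq> 0" "T \<noteq> 0" "F \<noteq> 0" "e \<noteq> 0" "e = 2*m+1" "G = e*F" "c = (1-\<alpha>)/2"
  hence j: "m = (e-1)/2" by simp
  show ?thesis unfolding j h(6,7) using h(1-4) that by (simp add: field_simps)
qed

lemma cancel_aux2: "(a::real) \<noteq> 0 \<Longrightarrow> t \<noteq> 0 \<Longrightarrow> s \<noteq> 0 \<Longrightarrow>
   t * (a * (N / (s * (t * T) * (a * F)))) = N / (s * T * F)"
  by (simp add: field_simps)

lemma hc_rec:
  assumes t: "t > 0"
  shows "hc \<alpha> t k = (if k = 0 then 0 else hc (\<alpha>-1) t (k-1)) - t * diffs (hc (\<alpha>-1) t) k"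
proof -
  have st: "sqrt t * sqrt t = t" using t by simp
  have st2: "\<And>z. sqrt t * (sqrt t * z) = t * z" using st by (simp add: mult.assoc[symmetric])
  have sp: "t powr ((\<alpha>-1)/2) = t powr (\<alpha>/2) / sqrt t"
    using t by (simp add: powr_diff powr_half_sqrt[symmetric] diff_divide_distrib)
  have sp0: "sqrt t > 0" using t by simp
  obtain m where "k = 2*m \<or> k = 2*m+1" by (metis oddE evenE)
  then consider "k = 2*m" | "k = 2*m+1" by blast
  then show ?thesis
  proof cases
    case 1
    define c where "c = 1 + -\<alpha>/2"
    have a1: "(1 - (\<alpha> - 1))/2 = c" by (simp add: c_def field_simps)
    have a2: "(\<alpha> - 1)/2 = \<alpha>/2 - 1/2" by simp
    have R: "hc (\<alpha>-1) t (2*m+1) = - Acoef \<alpha> * pochhammer c m * 2^m * t powr (\<alpha>/2) / (t * t^m * fact (2*m+1))"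
      unfolding hcO[OF t] Bcoef_minus1 a1 sp using sp0 st
      by (simp add: field_simps st2)
    have D: "t * diffs (hc (\<alpha>-1) t) (2*m) = - Acoef \<alpha> * pochhammer c m * 2^m * t powr (\<alpha>/2) / (t^m * fact (2*m))"
    proof -
      have f: "fact (2*m+1) = (2*real m+1) * (fact (2*m) :: real)" by simp
      have "t * diffs (hc (\<alpha>-1) t) (2*m) = t * ((2*real m+1) * hc (\<alpha>-1) t (2*m+1))"
        by (simp add: diffs_def)
      also have "\<dots> = - Acoef \<alpha> * pochhammer c m * 2^m * t powr (\<alpha>/2) / (t^m * fact (2*m))"
        unfolding R f using t by (intro cancel_aux) auto
      finally show ?thesis .
    qed
    show ?thesis
    proof (cases m)
      case 0
      thus ?thesis using 1 D t by (simp add: hc_def c_def)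
    next
      case (Suc j)
      have L: "hc (\<alpha>-1) t (2*j+1) = - Acoef \<alpha> * pochhammer c j * 2^j * t powr (\<alpha>/2) / (t * t^j * fact (2*j+1))"
        unfolding hcO[OF t] Bcoef_minus1 a1 sp using sp0 st
        by (simp add: field_simps st2)
      have k1: "k - 1 = 2*j+1" "k \<noteq> 0" using 1 Suc by auto
      have pm: "pochhammer (-\<alpha>/2) m = (-\<alpha>/2) * pochhammer c j"
        unfolding Suc c_def by (simp add: pochhammer_rec)
      have pc: "pochhammer c m = pochhammer c j * (c + j)"
        unfolding Suc by (simp add: pochhammer_rec')
      have f: "fact (2*m) = (2*real j+2) * fact (2*j+1)"
        unfolding Suc by (simp add: algebra_simps)
      have tm: "t^m = t * t^j" "(2::real)^m = 2 * 2^j" unfolding Suc by simp_all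
      have Z0: "hc \<alpha> t k = Acoef \<alpha> * ((-\<alpha>/2) * pochhammer c j) * (2 * 2^j) * t powr (\<alpha>/2) / ((t * t^j) * ((2*real j+2) * fact (2*j+1)))"
        unfolding 1 hcE[OF t] pm f tm ..
      have cm1: "-\<alpha>/2 = c - 1" by (simp add: c_def)
      have Z: "hc \<alpha> t k = Acoef \<alpha> * ((c - 1) * pochhammer c j) * (2 * 2^j) * t powr (\<alpha>/2) / ((t * t^j) * ((2*real j+2) * fact (2*j+1)))"
        using Z0 unfolding cm1 .
      have RHS: "(if k = 0 then 0 else hc (\<alpha>-1) t (k-1)) - t * diffs (hc (\<alpha>-1) t) k
        = - Acoef \<alpha> * pochhammer c j * 2^j * t powr (\<alpha>/2) / (t * t^j * fact (2*j+1))
          + Acoef \<alpha> * (pochhammer c j * (c + j)) * (2 * 2^j) * t powr (\<alpha>/2) / ((t * t^j) * ((2*real j+2) * fact (2*j+1)))"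
      proof -
        have D': "t * diffs (hc (\<alpha>-1) t) k = - Acoef \<alpha> * (pochhammer c j * (c + j)) * (2 * 2^j) * t powr (\<alpha>/2) / ((t * t^j) * ((2*real j+2) * fact (2*j+1)))"
          unfolding 1 using D unfolding pc f tm .
        show ?thesis unfolding D' using k1 L by simp
      qed
      show ?thesis unfolding Z RHS
        by (rule aux2[where e="2*real j+2"]) (use t in auto)
    qed
  next
    case 2
    define c where "c = (1-\<alpha>)/2"
    have a1: "-(\<alpha> - 1)/2 = c" by (simp add: c_def field_simps)
    have L: "hc (\<alpha>-1) t (2*m) = Acoef (\<alpha>-1) * pochhammer c m * 2^m * t powr (\<alpha>/2) / (sqrt t * t^m * fact (2*m))"
      unfolding hcE[OF t] a1 sp by simp
    have R: "hc (\<alpha>-1) t (2*(m+1)) = Acoef (\<alpha>-1) * pochhammer c (m+1) * 2^(m+1) * t powr (\<alpha>/2) / (sqrt t * t^(m+1) * fact (2*(m+1)))"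
      unfolding hcE[OF t] a1 sp by simp
    have D: "t * diffs (hc (\<alpha>-1) t) k = Acoef (\<alpha>-1) * (pochhammer c m * (c + m)) * (2 * 2^m) * t powr (\<alpha>/2) / (sqrt t * t^m * fact (2*m+1))"
    proof -
      have "Suc k = 2*(m+1)" using 2 by simp
      hence "t * diffs (hc (\<alpha>-1) t) k = t * ((2*real m+2) * hc (\<alpha>-1) t (2*(m+1)))" unfolding diffs_def by simp
      also have "t * ((2*real m+2) * hc (\<alpha>-1) t (2*(m+1))) = Acoef (\<alpha>-1) * pochhammer c (m+1) * 2^(m+1) * t powr (\<alpha>/2) / (sqrt t * t^m * fact (2*m+1))"
      proof -
        have ff: "fact (2*(m+1)) = (2*real m + 2) * (fact (2*m+1) :: real)" by (simp add: algebra_simps)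
        have tt: "t^(m+1) = t * t^m" by simp
        have R': "hc (\<alpha>-1) t (2*(m+1)) = Acoef (\<alpha>-1) * pochhammer c (m+1) * 2^(m+1) * t powr (\<alpha>/2) / (sqrt t * (t * t^m) * ((2*real m + 2) * fact (2*m+1)))"
          using R unfolding ff tt .
        show ?thesis unfolding R' using t by (intro cancel_aux2) auto
      qed
      finally show ?thesis by (simp add: pochhammer_rec' mult_ac)
    qed
    have E: "hc \<alpha> t k = (\<alpha> * Acoef (\<alpha>-1)) * pochhammer c m * 2^m * t powr (\<alpha>/2) / (sqrt t * t^m * fact (2*m+1))"
      unfolding 2 hcO[OF t] Acoef_minus1 c_def ..
    have k1: "k - 1 = 2*m" "k \<noteq> 0" using 2 by auto
    have f: "fact (2*m+1) = (2*real m+1) * (fact (2*m) :: real)" by simp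
    show ?thesis unfolding E D k1(1) L using k1 sp0 t
      by (intro aux3[where e="2*real m+1"]) (auto simp: c_def)
  qed
qed


lemma calH_sum: "t > 0 \<Longrightarrow> calH \<alpha> x t = (\<Sum>k. hc \<alpha> t k * x^k)"
  using calH_series sums_unique by blast

lemma calH_summable: "t > 0 \<Longrightarrow> summable (\<lambda>k. hc \<alpha> t k * x^k)"
  using calH_series sums_summable by blast

lemma calH_fun: "t > 0 \<Longrightarrow> (\<lambda>y. calH \<alpha> y t) = (\<lambda>y. \<Sum>k. hc \<alpha> t k * y^k)"
  using calH_sum by blast

lemma calH_has_deriv:
  assumes t: "t > 0"
  shows "((\<lambda>y. calH \<alpha> y t) has_real_derivative (\<Sum>k. diffs (hc \<alpha> t) k * x^k)) (at x)"
  unfolding calH_fun[OF t]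
  by (rule termdiffs_strong_converges_everywhere) (rule calH_summable[OF t])

lemma calH_deriv:
  assumes t: "t > 0"
  shows "deriv (\<lambda>y. calH \<alpha> y t) x = (\<Sum>k. diffs (hc \<alpha> t) k * x^k)"
  by (rule DERIV_imp_deriv[OF calH_has_deriv[OF t]])

lemma calH_rec:
  assumes t: "t > 0"
  shows "calH \<alpha> x t = x * calH (\<alpha>-1) x t - t * deriv (\<lambda>y. calH (\<alpha>-1) y t) x"
proof -
  define c where "c = hc (\<alpha>-1) t"
  have S: "(\<lambda>k. c k * x^k) sums calH (\<alpha>-1) x t" unfolding c_def by (rule calH_series[OF t])
  have Dsum: "(\<lambda>k. diffs c k * x^k) sums deriv (\<lambda>y. calH (\<alpha>-1) y t) x"
    unfolding calH_deriv[OF t] c_def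
    by (rule summable_sums, rule termdiff_converges_all, rule calH_summable[OF t])
  have sh: "(\<lambda>k. (if k = 0 then 0 else c (k-1)) * x^k) sums (x * calH (\<alpha>-1) x t)"
  proof -
    have "(\<lambda>k. x * (c k * x^k)) sums (x * calH (\<alpha>-1) x t)" by (rule sums_mult[OF S])
    hence "(\<lambda>k. (if Suc k = 0 then 0 else c (Suc k - 1)) * x^(Suc k)) sums (x * calH (\<alpha>-1) x t)"
      by (simp add: mult_ac)
    thus ?thesis by (subst (asm) sums_Suc_iff) simp
  qed
  have "(\<lambda>k. (if k = 0 then 0 else c (k-1)) * x^k - t * (diffs c k * x^k)) sums
        (x * calH (\<alpha>-1) x t - t * deriv (\<lambda>y. calH (\<alpha>-1) y t) x)"
    by (rule sums_diff[OF sh sums_mult[OF Dsum]])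
  moreover have "(\<lambda>k. (if k = 0 then 0 else c (k-1)) * x^k - t * (diffs c k * x^k)) = (\<lambda>k. hc \<alpha> t k * x^k)"
    by (rule ext) (simp add: hc_rec[OF t, of \<alpha>] c_def algebra_simps)
  ultimately show ?thesis using calH_series[OF t, of \<alpha> x] sums_unique2 by metis
qed


lemma Gamma_integral_real':
  assumes s: "s > (0::real)"
  shows "((\<lambda>v. v powr (s - 1) * exp (-v)) has_integral Gamma s) {0<..}"
proof -
  have "((\<lambda>v. v powr (s - 1) / exp v) has_integral Gamma s) {0..}"
    by (rule Gamma_integral_real[OF s])
  hence "((\<lambda>v. if v \<in> {0<..} then v powr (s - 1) / exp v else 0) has_integral Gamma s) {0..}"
    by (rule has_integral_spike[of "{0}", rotated 2]) auto
  also have "?this = ((\<lambda>v. v powr (s - 1) / exp v) has_integral Gamma s) {0<..}"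
    by (subst has_integral_restrict) auto
  finally show ?thesis by (simp add: exp_minus field_simps)
qed

lemma gauss_moment:
  assumes s: "s > (0::real)" and c: "c > 0"
  shows "(\<lambda>u. u powr (s - 1) * exp (-(c * u^2))) absolutely_integrable_on {0<..}"
        "integral {0<..} (\<lambda>u. u powr (s - 1) * exp (-(c * u^2))) = Gamma (s/2) / (2 * c powr (s/2))"
proof -
  define f where "f v = v powr (s/2 - 1) * exp (-v)" for v :: real
  define g where "g u = c * u^2" for u :: real
  have fint: "f absolutely_integrable_on {0<..}"
    unfolding f_def
    by (rule nonnegative_absolutely_integrable_1) (use Gamma_integral_real'[of "s/2"] s in auto)
  have fI: "integral {0<..} f = Gamma (s/2)"
    unfolding f_def using Gamma_integral_real'[of "s/2"] s by (simp add: integral_unique)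
  have gS: "g ` {0<..} = {0<..}"
  proof safe
    fix v :: real assume "v > 0"
    hence "sqrt (v/c) > 0" "g (sqrt (v/c)) = v" using c by (auto simp: g_def)
    thus "v \<in> g ` {0<..}" by (metis greaterThan_iff image_eqI)
  qed (use c in \<open>auto simp: g_def\<close>)
  have der: "(g has_field_derivative (2*c*u)) (at u within {0<..})" for u
    unfolding g_def by (auto intro!: derivative_eq_intros)
  have inj: "inj_on g {0<..}"
    using c by (auto simp: inj_on_def g_def)
  have key: "(\<lambda>u. \<bar>2*c*u\<bar> * f (g u)) absolutely_integrable_on {0<..} \<and>
           integral {0<..} (\<lambda>u. \<bar>2*c*u\<bar> * f (g u)) = Gamma (s/2)"
    using has_absolute_integral_change_of_variables_1'[OF _ der inj, of f "Gamma (s/2)"] fint fI gS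
    by auto
  have eq: "\<bar>2*c*u\<bar> * f (g u) = (2 * c powr (s/2)) * (u powr (s - 1) * exp (-(c * u^2)))"
    if u: "u \<in> {0<..}" for u
  proof -
    have u0: "u > 0" using u by simp
    have "(c * u^2) powr (s/2 - 1) = c powr (s/2 - 1) * u powr (s - 2)"
    proof -
      have "(c * u^2) powr (s/2 - 1) = c powr (s/2 - 1) * (u^2) powr (s/2 - 1)"
        using c by (simp add: powr_mult)
      also have "(u^2) powr (s/2 - 1) = (u powr 2) powr (s/2 - 1)"
        using u0 by (simp add: powr_realpow)
      also have "\<dots> = u powr (s - 2)"
        by (simp add: powr_powr algebra_simps)
      finally show ?thesis .
    qed
    hence "\<bar>2*c*u\<bar> * f (g u) = 2 * (c * c powr (s/2 - 1)) * (u * u powr (s - 2)) * exp (-(c * u^2))"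
      using u0 c by (simp add: f_def g_def abs_mult)
    also have "c * c powr (s/2 - 1) = c powr (s/2)"
      using c by (simp add: powr_diff)
    also have "u * u powr (s - 2) = u powr (s - 1)"
      using u0 by (simp add: powr_diff powr_add field_simps power2_eq_square)
    finally show ?thesis by simp
  qed
  have cp: "2 * c powr (s/2) > 0" using c by simp
  have A: "(\<lambda>u. (2 * c powr (s/2)) * (u powr (s - 1) * exp (-(c * u^2)))) absolutely_integrable_on {0<..}"
    using key absolutely_integrable_spike[of "{}"] eq
    by (metis (no_types, lifting) absolutely_integrable_on_def integrable_eq integrable_spike_finite)
  show "(\<lambda>u. u powr (s - 1) * exp (-(c * u^2))) absolutely_integrable_on {0<..}"
    using absolutely_integrable_scaleR_left[OF A, of "inverse (2 * c powr (s/2))"] cp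
    by simp
  have "integral {0<..} (\<lambda>u. (2 * c powr (s/2)) * (u powr (s - 1) * exp (-(c * u^2)))) = Gamma (s/2)"
    using key eq by (metis (no_types, lifting) integral_cong)
  hence "(2 * c powr (s/2)) * integral {0<..} (\<lambda>u. u powr (s - 1) * exp (-(c * u^2))) = Gamma (s/2)"
    by (simp add: integral_mult_right)
  thus "integral {0<..} (\<lambda>u. u powr (s - 1) * exp (-(c * u^2))) = Gamma (s/2) / (2 * c powr (s/2))"
    using cp by (simp add: field_simps)
qed


lemma Gamma_dup_real:
  assumes s: "s > (0::real)"
  shows "Gamma (s/2) * Gamma ((s+1)/2) = 2 powr (1-s) * sqrt pi * Gamma s"
proof -
  define z where "z = complex_of_real (s/2)"
  have z1: "z \<notin> \<int>\<^sub>\<le>\<^sub>0" unfolding z_def of_real_in_nonpos_Ints_iff using s by auto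
  have z2: "z + 1/2 \<notin> \<int>\<^sub>\<le>\<^sub>0"
  proof -
    have e: "z + 1/2 = complex_of_real ((s+1)/2)" unfolding z_def by (simp add: field_simps)
    show ?thesis unfolding e of_real_in_nonpos_Ints_iff using s by auto
  qed
  have D: "Gamma z * Gamma (z + 1/2) = exp ((1 - 2*z) * of_real (ln 2)) * of_real (sqrt pi) * Gamma (2*z)"
    by (rule Gamma_legendre_duplication[OF z1 z2])
  have e1: "z + 1/2 = complex_of_real ((s+1)/2)" unfolding z_def by (simp add: field_simps)
  have e2: "2*z = complex_of_real s" unfolding z_def by simp
  have e3: "(1 - 2*z) * of_real (ln 2) = complex_of_real ((1-s) * ln 2)" unfolding z_def by simp
  have "complex_of_real (Gamma (s/2) * Gamma ((s+1)/2)) = complex_of_real (exp ((1-s) * ln 2) * sqrt pi * Gamma s)"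
    using D unfolding e1 e2 e3 unfolding z_def Gamma_complex_of_real by (simp flip: exp_of_real)
  hence "Gamma (s/2) * Gamma ((s+1)/2) = exp ((1-s) * ln 2) * sqrt pi * Gamma s"
    using of_real_eq_iff by blast
  thus ?thesis by (simp add: powr_def)
qed

lemma gauss_dom:
  fixes f :: "real \<Rightarrow> real"
  assumes s: "s > 0" and a: "a > 0" and cont: "continuous_on {0<..} f"
    and bnd: "\<And>u. u > 0 \<Longrightarrow> \<bar>f u\<bar> \<le> K * (u powr (s-1) * exp (b*u - a*u^2))"
  shows "f absolutely_integrable_on {0<..}"
proof (rule measurable_bounded_by_integrable_imp_absolutely_integrable)
  show "f \<in> borel_measurable (lebesgue_on {0<..})"
    by (rule continuous_imp_measurable_on_sets_lebesgue[OF cont]) auto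
  show "{0::real<..} \<in> sets lebesgue" by simp
  have "(\<lambda>u. u powr (s - 1) * exp (-((a/2) * u^2))) integrable_on {0<..}"
    using gauss_moment(1)[OF s, of "a/2"] a set_lebesgue_integral_eq_integral(1) by auto
  thus "(\<lambda>u. (K * exp (b^2/(2*a))) * (u powr (s - 1) * exp (-((a/2) * u^2)))) integrable_on {0<..}"
    by (rule integrable_on_mult_right)
  fix u :: real assume "u \<in> {0<..}"
  hence u: "u > 0" by simp
  have pos: "u powr (s-1) * exp (b*u - a*u^2) > 0" using u by simp
  have "0 \<le> K * (u powr (s-1) * exp (b*u - a*u^2))" using bnd[OF u] abs_ge_zero order_trans by blast
  hence K: "K \<ge> 0" using pos by (simp add: zero_le_mult_iff)
  have "b*u - a*u^2 \<le> b^2/(2*a) + (-((a/2) * u^2))"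
  proof -
    have "0 \<le> (a/2) * (u - b/a)^2" using a by simp
    also have "(a/2) * (u - b/a)^2 = (a/2)*u^2 - b*u + b^2/(2*a)"
      using a by (simp add: power2_eq_square field_simps)
    finally show ?thesis by simp
  qed
  hence "exp (b*u - a*u^2) \<le> exp (b^2/(2*a)) * exp (-((a/2) * u^2))"
    by (simp add: exp_add[symmetric])
  hence "K * (u powr (s-1) * exp (b*u - a*u^2)) \<le> K * (u powr (s-1) * (exp (b^2/(2*a)) * exp (-((a/2) * u^2))))"
    using K by (intro mult_left_mono) auto
  with bnd[OF u] show "norm (f u) \<le> (K * exp (b^2/(2*a))) * (u powr (s - 1) * exp (-((a/2) * u^2)))"
    by (simp add: mult_ac)
qed


lemma moment_coef:
  assumes s: "s > 0" and t: "t > 0"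
  shows "(-1)^k / fact k * (Gamma ((s + real k)/2) / (2 * (t/2) powr ((s + real k)/2)))
         = Gamma s * hc (-s) t k"
proof -
  define G1 where "G1 = Gamma (s/2)"
  define G2 where "G2 = Gamma ((s+1)/2)"
  define P2 where "P2 = (2::real) powr (s/2)"
  define T where "T = t powr (s/2)"
  have G1: "G1 > 0" unfolding G1_def using s by (simp add: Gamma_real_pos)
  have G2: "G2 > 0" unfolding G2_def using s by (simp add: Gamma_real_pos)
  have P2: "P2 > 0" unfolding P2_def by simp
  have T: "T > 0" unfolding T_def using t by simp
  have sp: "sqrt pi > 0" by simp
  have Gs: "Gamma s = G1 * G2 * (P2 * P2) / (2 * sqrt pi)"
  proof -
    have "G1 * G2 = 2 powr (1-s) * sqrt pi * Gamma s" unfolding G1_def G2_def by (rule Gamma_dup_real[OF s])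
    moreover have "(2::real) powr (1-s) * (P2 * P2) = 2"
      unfolding P2_def by (simp add: powr_add[symmetric])
    ultimately show ?thesis using sp by (simp add: field_simps)
  qed
  have tm: "t powr (-s/2) = 1/T" unfolding T_def by (simp add: powr_minus_divide)
  obtain m where "k = 2*m \<or> k = 2*m+1" by (metis oddE evenE)
  then consider "k = 2*m" | "k = 2*m+1" by blast
  then show ?thesis
  proof cases
    case 1
    have a: "(s + real k)/2 = s/2 + real m" using 1 by simp
    have tp: "(t/2) powr (s/2 + real m) = T / P2 * (t^m / 2^m)"
      unfolding T_def P2_def using t by (simp add: powr_add powr_divide powr_realpow power_divide)
    have Ac: "Acoef (-s) = sqrt pi / P2 / G2"
      unfolding Acoef_def P2_def G2_def by (simp add: powr_minus_divide rGamma_inverse_Gamma field_simps add.commute)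
    have pc: "pochhammer (s/2) m = Gamma (s/2 + real m) / G1"
      unfolding G1_def using s by (subst pochhammer_Gamma) (auto dest: nonpos_Ints_nonpos)
    have "hc (-s) t k = Acoef (-s) * pochhammer (s/2) m * 2^m * (1/T) / (t^m * fact (2*m))"
      unfolding 1 hcE[OF t] using tm by simp
    hence H: "hc (-s) t k = sqrt pi / P2 / G2 * (Gamma (s/2 + real m) / G1) * 2^m * (1/T) / (t^m * fact (2*m))"
      unfolding Ac pc .
    show ?thesis unfolding H a tp Gs unfolding 1 using G1 G2 P2 T sp t
      by (simp add: field_simps)
  next
    case 2
    have a: "(s + real k)/2 = (s+1)/2 + real m" using 2 by simp
    have tp: "(t/2) powr ((s+1)/2 + real m) = T * sqrt t / (P2 * sqrt 2) * (t^m / 2^m)"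
    proof -
      have "(t/2) powr ((s+1)/2 + real m) = (t/2) powr (s/2) * (t/2) powr (1/2) * (t/2)^m"
        using t by (simp add: powr_add[symmetric] powr_realpow[symmetric] add_divide_distrib)
      thus ?thesis
        unfolding T_def P2_def using t by (simp add: powr_divide power_divide powr_half_sqrt real_sqrt_divide)
    qed
    have Bc: "Bcoef (-s) = - sqrt pi * sqrt 2 / P2 / G1"
    proof -
      have "(2::real) powr ((-s+1)/2) = sqrt 2 / P2"
      proof -
        have "(2::real) powr ((-s+1)/2) = 2 powr (1/2 - s/2)"
          by (rule arg_cong[where f="\<lambda>x. (2::real) powr x"]) (simp add: field_simps)
        thus ?thesis unfolding P2_def by (simp add: powr_diff powr_half_sqrt)
      qed
      thus ?thesis unfolding Bcoef_def G1_def by (simp add: rGamma_inverse_Gamma field_simps)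
    qed
    have pc: "pochhammer ((1 - -s)/2) m = Gamma ((s+1)/2 + real m) / G2"
    proof -
      have "(1 - -s)/2 = (s+1)/2" by simp
      thus ?thesis unfolding G2_def using s by (simp, subst pochhammer_Gamma) (auto dest: nonpos_Ints_nonpos simp: add.commute)
    qed
    have "hc (-s) t k = Bcoef (-s) * pochhammer ((1 - -s)/2) m * 2^m * (1/T) / (sqrt t * t^m * fact (2*m+1))"
      unfolding 2 hcO[OF t] using tm by simp
    hence H: "hc (-s) t k = - sqrt pi * sqrt 2 / P2 / G1 * (Gamma ((s+1)/2 + real m) / G2) * 2^m * (1/T) / (sqrt t * t^m * fact (2*m+1))"
      unfolding Bc pc .
    define F where "F = (fact (2*m+1) :: real)"
    have F: "F > 0" unfolding F_def by simp
    define GG where "GG = Gamma ((s+1)/2 + real m)"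
    show ?thesis unfolding H a tp Gs unfolding 2 F_def[symmetric] GG_def[symmetric] using G1 G2 P2 T sp t F
      by (simp add: field_simps)
  qed
qed


lemma cont_powr_exp:
  "continuous_on {0<..} (\<lambda>u::real. u powr (s-1) * exp (b*u - a*u^2))"
  by (intro continuous_intros) auto

lemma neg_case:
  fixes s t x :: real
  assumes s: "s > 0" and t: "t > 0"
  shows "(\<lambda>u. u powr (s-1) * exp (- u * x - u^2 / 2 * t)) absolutely_integrable_on {0<..}"
    and "integral {0<..} (\<lambda>u. u powr (s-1) * exp (- u * x - u^2 / 2 * t)) = Gamma s * calH (-s) x t"
proof -
  define g where "g u = u powr (s-1) * exp (- u * x - u^2 / 2 * t)" for u :: real
  define mom where "mom k u = u powr (s + real k - 1) * exp (-((t/2) * u^2))" for k :: nat and u :: real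
  define I where "I k = Gamma ((s + real k)/2) / (2 * (t/2) powr ((s + real k)/2))" for k :: nat
  define fN where "fN N u = (\<Sum>k<N. (-x)^k / fact k * mom k u)" for N :: nat and u :: real
  define h where "h u = u powr (s-1) * exp (\<bar>x\<bar> * u - (t/2) * u^2)" for u :: real
  have t2: "t/2 > 0" using t by simp
  have momI: "mom k integrable_on {0<..}" for k
  proof -
    have "s + real k > 0" using s by simp
    from gauss_moment(1)[OF this t2] show ?thesis
      unfolding mom_def using set_lebesgue_integral_eq_integral(1) by blast
  qed
  have momV: "integral {0<..} (mom k) = I k" for k
  proof -
    have "s + real k > 0" using s by simp
    from gauss_moment(2)[OF this t2] show ?thesis unfolding mom_def I_def .
  qed
  have fNI: "fN N integrable_on {0<..}" for N
    unfolding fN_def by (intro integrable_sum integrable_on_mult_right momI) auto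
  have fNV: "integral {0<..} (fN N) = (\<Sum>k<N. (-x)^k / fact k * I k)" for N
    unfolding fN_def
    by (subst integral_sum) (auto intro!: integrable_on_mult_right momI simp: momV)
  have gabs: "g absolutely_integrable_on {0<..}"
  proof (rule gauss_dom[OF s t2, where K=1 and b="\<bar>x\<bar>"])
    show "continuous_on {0<..} g" unfolding g_def by (intro continuous_intros) auto
    fix u :: real assume u: "u > 0"
    have "- u * x - u^2/2*t \<le> \<bar>x\<bar> * u - t/2 * u^2"
    proof -
      have "- u * x \<le> \<bar>x\<bar> * u" using u by (metis abs_ge_minus_self mult.commute mult_minus_left mult_right_mono less_imp_le)
      moreover have "u^2/2*t = t/2 * u^2" by simp
      ultimately show ?thesis by linarith
    qed
    thus "\<bar>g u\<bar> \<le> 1 * (u powr (s - 1) * exp (\<bar>x\<bar> * u - t/2 * u^2))"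
      unfolding g_def using u by (simp add: abs_mult mult_left_mono)
  qed
  have hI: "h integrable_on {0<..}"
  proof -
    have "h absolutely_integrable_on {0<..}"
    proof (rule gauss_dom[OF s t2, where K=1 and b="\<bar>x\<bar>"])
      show "continuous_on {0<..} h" unfolding h_def by (intro continuous_intros) auto
      fix u :: real assume u: "u > 0"
      show "\<bar>h u\<bar> \<le> 1 * (u powr (s - 1) * exp (\<bar>x\<bar> * u - t/2 * u^2))"
        unfolding h_def by simp
    qed
    thus ?thesis using set_lebesgue_integral_eq_integral(1) by blast
  qed
  have fN_eq: "fN N u = u powr (s-1) * exp (-((t/2) * u^2)) * (\<Sum>k<N. (-x*u)^k / fact k)" if u: "u > 0" for N u
  proof -
    have "mom k u = u powr (s-1) * exp (-((t/2) * u^2)) * u^k" for k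
    proof -
      have "u powr (s + real k - 1) = u powr (s - 1 + real k)" by (simp add: algebra_simps)
      also have "\<dots> = u powr (s-1) * u^k" using u by (simp add: powr_add powr_realpow)
      finally show ?thesis unfolding mom_def by simp
    qed
    thus ?thesis unfolding fN_def sum_distrib_left by (intro sum.cong refl) (simp add: power_mult_distrib[symmetric] mult_ac)
  qed
  have bound: "norm (fN N u) \<le> h u" if u: "u \<in> {0<..}" for N u
  proof -
    have u0: "u > 0" using u by simp
    have ES: "(\<lambda>k. \<bar>x*u\<bar>^k / fact k) sums exp \<bar>x*u\<bar>"
      using exp_converges[of "\<bar>x*u\<bar>"] by (simp add: divide_inverse mult.commute)
    have "\<bar>\<Sum>k<N. (-x*u)^k / fact k\<bar> \<le> (\<Sum>k<N. \<bar>x*u\<bar>^k / fact k)"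
      by (rule order_trans[OF sum_abs]) (simp add: abs_mult power_abs)
    also have "(\<Sum>k<N. \<bar>x*u\<bar>^k / fact k) \<le> (\<Sum>k. \<bar>x*u\<bar>^k / fact k)"
      by (rule sum_le_suminf) (use ES sums_summable in auto)
    also have "\<dots> = exp \<bar>x*u\<bar>"
      using ES sums_unique by metis
    finally have e: "\<bar>\<Sum>k<N. (-x*u)^k / fact k\<bar> \<le> exp (\<bar>x\<bar> * u)" using u0 by (simp add: abs_mult)
    have "norm (fN N u) = u powr (s-1) * exp (-((t/2) * u^2)) * \<bar>\<Sum>k<N. (-x*u)^k / fact k\<bar>"
      unfolding fN_eq[OF u0] using u0 by (simp add: abs_mult)
    also have "\<dots> \<le> u powr (s-1) * exp (-((t/2) * u^2)) * exp (\<bar>x\<bar> * u)"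
      by (rule mult_left_mono[OF e]) simp
    also have "\<dots> = h u" unfolding h_def by (simp add: exp_add[symmetric] algebra_simps)
    finally show ?thesis .
  qed
  have conv: "(\<lambda>N. fN N u) \<longlonglongrightarrow> g u" if u: "u \<in> {0<..}" for u
  proof -
    have u0: "u > 0" using u by simp
    have "(\<lambda>N. \<Sum>k<N. (-x*u)^k / fact k) \<longlonglongrightarrow> exp (-x*u)"
      using exp_converges[of "-x*u"] by (simp add: sums_def divide_inverse mult.commute)
    hence "(\<lambda>N. u powr (s-1) * exp (-((t/2) * u^2)) * (\<Sum>k<N. (-x*u)^k / fact k))
             \<longlonglongrightarrow> u powr (s-1) * exp (-((t/2) * u^2)) * exp (-x*u)"
      by (intro tendsto_mult_left)
    moreover have "u powr (s-1) * exp (-((t/2) * u^2)) * exp (-x*u) = g u"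
      unfolding g_def by (simp add: exp_add[symmetric] algebra_simps)
    ultimately show ?thesis using fN_eq[OF u0] by simp
  qed
  have DC: "(\<lambda>N. integral {0<..} (fN N)) \<longlonglongrightarrow> integral {0<..} g"
    by (rule dominated_convergence(2)[OF fNI hI bound conv])
  have "(\<lambda>k. (-x)^k / fact k * I k) sums integral {0<..} g"
    unfolding sums_def using DC fNV by simp
  moreover have "(-x)^k / fact k * I k = Gamma s * (hc (-s) t k * x^k)" for k
  proof -
    have "(-x)^k / fact k * I k = ((-1)^k / fact k * I k) * x^k"
      by (simp add: power_minus[of x])
    also have "\<dots> = Gamma s * hc (-s) t k * x^k"
      using moment_coef[OF s t, of k] unfolding I_def by simp
    finally show ?thesis by simp
  qed
  ultimately have "(\<lambda>k. Gamma s * (hc (-s) t k * x^k)) sums integral {0<..} g" by simp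
  moreover have "(\<lambda>k. Gamma s * (hc (-s) t k * x^k)) sums (Gamma s * calH (-s) x t)"
    by (rule sums_mult[OF calH_series[OF t]])
  ultimately show "integral {0<..} g = Gamma s * calH (-s) x t" using sums_unique2 by blast
  show "g absolutely_integrable_on {0<..}" by (rule gabs)
qed


fun Epoly :: "real \<Rightarrow> nat \<Rightarrow> real poly" where
  "Epoly t 0 = 1"
| "Epoly t (Suc n) = smult t (pderiv (Epoly t n)) - [:0,1:] * Epoly t n"

lemma phi_has_deriv:
  "((\<lambda>u. poly p (x + t*u) * exp (- u * x - u^2/2*t)) has_real_derivative
     (poly (smult t (pderiv p) - [:0,1:] * p) (x + t*u) * exp (- u * x - u^2/2*t))) (at u)"
proof -
  have d1: "((\<lambda>u. poly p (x + t*u)) has_real_derivative poly (pderiv p) (x + t*u) * t) (at u)"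
    by (rule DERIV_chain2[OF poly_DERIV]) (auto intro!: derivative_eq_intros)
  have d2: "((\<lambda>u. exp (- u * x - u^2/2*t)) has_real_derivative exp (- u * x - u^2/2*t) * (- x - t*u)) (at u)"
    by (auto intro!: derivative_eq_intros simp: power2_eq_square algebra_simps)
  have "((\<lambda>u. poly p (x + t*u) * exp (- u * x - u^2/2*t)) has_real_derivative
     (poly (pderiv p) (x + t*u) * t * exp (- u * x - u^2/2*t) + exp (- u * x - u^2/2*t) * (- x - t*u) * poly p (x + t*u))) (at u)"
    by (rule DERIV_mult[OF d1 d2])
  moreover have "poly (pderiv p) (x + t*u) * t * exp (- u * x - u^2/2*t) + exp (- u * x - u^2/2*t) * (- x - t*u) * poly p (x + t*u)
     = poly (smult t (pderiv p) - [:0,1:] * p) (x + t*u) * exp (- u * x - u^2/2*t)"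
    by (simp add: algebra_simps)
  ultimately show ?thesis by simp
qed

lemma deriv_phi:
  "(deriv ^^ n) (\<lambda>u. exp (- u * x - u^2/2*t)) = (\<lambda>u. poly (Epoly t n) (x + t*u) * exp (- u * x - u^2/2*t))"
proof (induction n)
  case 0
  show ?case by simp
next
  case (Suc n)
  show ?case
    by (simp only: funpow.simps(2) o_def Suc.IH Epoly.simps)
       (rule ext, rule DERIV_imp_deriv, rule phi_has_deriv)
qed

lemma hc_zero: "t > 0 \<Longrightarrow> hc 0 t k = (if k = 0 then 1 else 0)"
proof -
  assume t: "t > 0"
  have A: "Acoef 0 = 1" unfolding Acoef_def
    by (simp add: rGamma_inverse_Gamma Gamma_one_half_real)
  have B: "Bcoef 0 = 0" unfolding Bcoef_def by simp
  show ?thesis unfolding hc_def A B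
    using t by (auto simp: pochhammer_0_left elim!: evenE)
qed

lemma calH_zero: "t > 0 \<Longrightarrow> calH 0 x t = 1"
proof -
  assume t: "t > 0"
  have "(\<lambda>k. hc 0 t k * x^k) = (\<lambda>k. if k = 0 then 1 else 0)"
    by (auto simp: hc_zero[OF t])
  hence "(\<lambda>k. hc 0 t k * x^k) sums 1" using sums_single[of 0 "\<lambda>_. 1::real"] by simp
  thus ?thesis using calH_series[OF t, of 0 x] sums_unique2 by blast
qed

lemma int_case:
  assumes t: "t > 0"
  shows "calH (real n) x t = (-1)^n * poly (Epoly t n) x"
proof (induction n arbitrary: x)
  case 0
  show ?case using calH_zero[OF t] by simp
next
  case (Suc n)
  have f: "(\<lambda>y. calH (real n) y t) = (\<lambda>y. (-1)^n * poly (Epoly t n) y)" using Suc.IH by blast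
  have d: "deriv (\<lambda>y. (-1)^n * poly (Epoly t n) y) x = (-1)^n * poly (pderiv (Epoly t n)) x"
    by (rule DERIV_imp_deriv) (auto intro!: derivative_eq_intros)
  have "calH (real (Suc n)) x t = x * calH (real (Suc n) - 1) x t - t * deriv (\<lambda>y. calH (real (Suc n) - 1) y t) x"
    by (rule calH_rec[OF t])
  also have "real (Suc n) - 1 = real n" by simp
  finally show ?case unfolding d Suc.IH by (simp add: algebra_simps)
qed


lemma mvt_bound:
  fixes g g' :: "real \<Rightarrow> real"
  assumes d: "\<And>y. (g has_real_derivative g' y) (at y)"
    and b: "\<And>y. \<bar>y - x\<bar> \<le> 1 \<Longrightarrow> \<bar>g' y\<bar> \<le> B"
    and h: "\<bar>h\<bar> \<le> 1"
  shows "\<bar>g (x+h) - g x\<bar> \<le> \<bar>h\<bar> * B"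
proof -
  have cont: "continuous_on S g" for S
    by (rule continuous_at_imp_continuous_on) (use d DERIV_isCont in blast)
  have hd: "(g has_derivative (*) (g' y)) (at y)" for y
    using d[of y] unfolding has_field_derivative_def .
  consider "h = 0" | "h > 0" | "h < 0" by linarith
  then show ?thesis
  proof cases
    case 1 thus ?thesis by simp
  next
    case 2
    obtain z where z: "x < z" "z < x + h" "g (x+h) - g x = g' z * (x + h - x)"
      using mvt[OF _ cont hd, of x "x+h"] 2 by auto
    have "\<bar>g' z\<bar> \<le> B" using b z h 2 by auto
    thus ?thesis using z 2 by (simp add: abs_mult mult.commute mult_left_mono)
  next
    case 3
    obtain z where z: "x + h < z" "z < x" "g x - g (x+h) = g' z * (x - (x + h))"
      using mvt[OF _ cont hd, of "x+h" x] 3 by auto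
    have "\<bar>g' z\<bar> \<le> B" using b z h 3 by auto
    moreover have "\<bar>g (x+h) - g x\<bar> = \<bar>h\<bar> * \<bar>g' z\<bar>" using z 3 by (simp add: abs_mult abs_minus_commute)
    ultimately show ?thesis by (simp add: mult_left_mono)
  qed
qed

lemma deriv_under_integral:
  fixes f f' :: "real \<Rightarrow> real \<Rightarrow> real" and S :: "real set" and B :: "real \<Rightarrow> real"
  assumes int: "\<And>y. f y integrable_on S"
    and der: "\<And>u y. u \<in> S \<Longrightarrow> ((\<lambda>y. f y u) has_real_derivative f' y u) (at y)"
    and bnd: "\<And>u y. u \<in> S \<Longrightarrow> \<bar>y - x\<bar> \<le> 1 \<Longrightarrow> \<bar>f' y u\<bar> \<le> B u"
    and BI: "B integrable_on S"
  shows "((\<lambda>y. integral S (f y)) has_real_derivative integral S (f' x)) (at x)"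
  unfolding DERIV_def
proof (subst tendsto_at_iff_sequentially, intro allI impI)
  fix X :: "nat \<Rightarrow> real"
  assume X0: "\<forall>i. X i \<in> UNIV - {0}" and X: "X \<longlonglongrightarrow> 0"
  obtain N where N: "\<And>i. i \<ge> N \<Longrightarrow> \<bar>X i\<bar> < 1"
    using LIMSEQ_D[OF X, of 1] by auto
  define Y where "Y i = X (i + N)" for i
  have Y0: "Y i \<noteq> 0" for i using X0 by (simp add: Y_def)
  have Y1: "\<bar>Y i\<bar> \<le> 1" for i using N[of "i+N"] by (simp add: Y_def)
  have Y: "Y \<longlonglongrightarrow> 0" unfolding Y_def by (rule LIMSEQ_ignore_initial_segment[OF X])
  define q where "q h u = (f (x+h) u - f x u) * inverse h" for h u
  have qI: "q h integrable_on S" for h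
    unfolding q_def by (intro integrable_on_mult_left integrable_diff int)
  have qV: "integral S (q h) = (integral S (f (x+h)) - integral S (f x)) / h" for h
    unfolding q_def by (simp add: integral_diff int divide_inverse)
  have qB: "norm (q (Y i) u) \<le> B u" if u: "u \<in> S" for i u
  proof -
    have "\<bar>f (x + Y i) u - f x u\<bar> \<le> \<bar>Y i\<bar> * B u"
      by (rule mvt_bound[where g="\<lambda>y. f y u" and g'="\<lambda>y. f' y u"]) (use der[OF u] bnd[OF u] Y1 in auto)
    thus ?thesis unfolding q_def using Y0[of i]
      by (simp add: abs_mult field_simps)
  qed
  have qC: "(\<lambda>i. q (Y i) u) \<longlonglongrightarrow> f' x u" if u: "u \<in> S" for u
  proof -
    have L: "((\<lambda>h. (f (x + h) u - f x u) / h) \<longlongrightarrow> f' x u) (at 0)"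
      using der[OF u, of x] unfolding DERIV_def .
    have F: "filterlim Y (at 0) sequentially"
      unfolding filterlim_at using Y Y0 by auto
    have "(\<lambda>i. (f (x + Y i) u - f x u) / Y i) \<longlonglongrightarrow> f' x u"
      using filterlim_compose[OF L F] by (simp add: o_def)
    thus ?thesis unfolding q_def by (simp add: divide_inverse)
  qed
  have "(\<lambda>i. integral S (q (Y i))) \<longlonglongrightarrow> integral S (f' x)"
    by (rule dominated_convergence(2)[OF qI BI qB qC])
  hence "(\<lambda>i. ((\<lambda>h. (integral S (f (x + h)) - integral S (f x)) / h) \<circ> X) (i + N)) \<longlonglongrightarrow> integral S (f' x)"
    unfolding qV Y_def by (simp add: o_def)
  thus "((\<lambda>h. (integral S (f (x + h)) - integral S (f x)) / h) \<circ> X) \<longlonglongrightarrow> integral S (f' x)"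
    by (rule LIMSEQ_offset)
qed

lemma poly_bound:
  fixes q :: "real poly"
  shows "\<exists>K c. K \<ge> 0 \<and> c \<ge> 0 \<and> (\<forall>z. \<bar>poly q z\<bar> \<le> K * exp (c * \<bar>z\<bar>))"
proof (induction q)
  case 0
  show ?case by (intro exI[of _ 0]) auto
next
  case (pCons a p)
  then obtain K c where Kc: "K \<ge> 0" "c \<ge> 0" "\<And>z. \<bar>poly p z\<bar> \<le> K * exp (c * \<bar>z\<bar>)" by blast
  have "\<forall>z. \<bar>poly (pCons a p) z\<bar> \<le> (\<bar>a\<bar> + K) * exp ((c+1) * \<bar>z\<bar>)"
  proof
    fix z :: real
    have e1: "1 \<le> exp ((c+1) * \<bar>z\<bar>)" using Kc by simp
    have e2: "\<bar>z\<bar> * exp (c * \<bar>z\<bar>) \<le> exp ((c+1) * \<bar>z\<bar>)"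
    proof -
      have "\<bar>z\<bar> \<le> exp \<bar>z\<bar>" using exp_ge_add_one_self[of "\<bar>z\<bar>"] by linarith
      hence "\<bar>z\<bar> * exp (c * \<bar>z\<bar>) \<le> exp \<bar>z\<bar> * exp (c * \<bar>z\<bar>)" by (intro mult_right_mono) auto
      also have "\<dots> = exp ((c+1) * \<bar>z\<bar>)" by (simp add: exp_add[symmetric] algebra_simps)
      finally show ?thesis .
    qed
    have "\<bar>poly (pCons a p) z\<bar> \<le> \<bar>a\<bar> + \<bar>z\<bar> * \<bar>poly p z\<bar>"
      by (simp add: abs_mult[symmetric] abs_triangle_ineq)
    also have "\<dots> \<le> \<bar>a\<bar> * exp ((c+1) * \<bar>z\<bar>) + K * (\<bar>z\<bar> * exp (c * \<bar>z\<bar>))"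
    proof (intro add_mono)
      show "\<bar>a\<bar> \<le> \<bar>a\<bar> * exp ((c+1) * \<bar>z\<bar>)" using e1 by (simp add: mult_le_cancel_left1)
      have "\<bar>z\<bar> * \<bar>poly p z\<bar> \<le> \<bar>z\<bar> * (K * exp (c * \<bar>z\<bar>))" by (intro mult_left_mono Kc) auto
      thus "\<bar>z\<bar> * \<bar>poly p z\<bar> \<le> K * (\<bar>z\<bar> * exp (c * \<bar>z\<bar>))" by (simp add: mult_ac)
    qed
    also have "\<dots> \<le> \<bar>a\<bar> * exp ((c+1) * \<bar>z\<bar>) + K * exp ((c+1) * \<bar>z\<bar>)"
      by (intro add_left_mono mult_left_mono e2 Kc)
    finally show "\<bar>poly (pCons a p) z\<bar> \<le> (\<bar>a\<bar> + K) * exp ((c+1) * \<bar>z\<bar>)" by (simp add: algebra_simps)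
  qed
  thus ?case using Kc by (intro exI[of _ "\<bar>a\<bar> + K"] exI[of _ "c + 1"]) auto
qed


definition ker :: "real \<Rightarrow> real \<Rightarrow> real poly \<Rightarrow> real \<Rightarrow> real \<Rightarrow> real" where
  "ker \<beta> t p y u = u powr (\<beta>-1) * (poly p (y + t*u) * exp (- u * y - u^2/2*t))"

lemma ker_bound:
  fixes t x :: real and p :: "real poly"
  assumes t: "t > 0"
  shows "\<exists>K b. K \<ge> 0 \<and> b \<ge> 0 \<and> (\<forall>y u. \<bar>y - x\<bar> \<le> 1 \<longrightarrow> u > 0 \<longrightarrow> \<bar>poly p (y + t*u)\<bar> \<le> K * exp (b*u))"
proof -
  obtain K c where Kc: "K \<ge> 0" "c \<ge> 0" "\<And>z. \<bar>poly p z\<bar> \<le> K * exp (c * \<bar>z\<bar>)"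
    using poly_bound[of p] by blast
  have "\<bar>poly p (y + t*u)\<bar> \<le> (K * exp (c * (\<bar>x\<bar> + 1))) * exp ((c*t)*u)"
    if y: "\<bar>y - x\<bar> \<le> 1" and u: "u > 0" for y u
  proof -
    have "\<bar>y + t*u\<bar> \<le> \<bar>y\<bar> + t*u" using u t abs_triangle_ineq[of y "t*u"] by simp
    moreover have "\<bar>y\<bar> \<le> \<bar>x\<bar> + 1" using y abs_triangle_ineq[of x "y - x"] by simp
    ultimately have "\<bar>y + t*u\<bar> \<le> (\<bar>x\<bar> + 1) + t*u" by linarith
    hence "c * \<bar>y + t*u\<bar> \<le> c * (\<bar>x\<bar> + 1) + (c*t)*u" using Kc(2) by (metis distrib_left mult.assoc mult_left_mono)
    hence "exp (c * \<bar>y + t*u\<bar>) \<le> exp (c * (\<bar>x\<bar> + 1)) * exp ((c*t)*u)" by (simp add: exp_add[symmetric])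
    hence "K * exp (c * \<bar>y + t*u\<bar>) \<le> K * (exp (c * (\<bar>x\<bar> + 1)) * exp ((c*t)*u))" by (rule mult_left_mono) (rule Kc)
    with Kc(3)[of "y + t*u"] show ?thesis by (simp add: mult_ac)
  qed
  thus ?thesis using Kc t by (intro exI[of _ "K * exp (c * (\<bar>x\<bar> + 1))"] exI[of _ "c*t"]) auto
qed

lemma ker_int:
  fixes \<beta> t y :: real and p :: "real poly"
  assumes b: "\<beta> > 0" and t: "t > 0"
  shows "ker \<beta> t p y absolutely_integrable_on {0<..}"
proof -
  obtain K b where Kb: "K \<ge> 0" "b \<ge> 0" "\<And>y' u. \<bar>y' - y\<bar> \<le> 1 \<Longrightarrow> u > 0 \<Longrightarrow> \<bar>poly p (y' + t*u)\<bar> \<le> K * exp (b*u)"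
    using ker_bound[OF t, of y p] by blast
  have t2: "t/2 > 0" using t by simp
  show ?thesis
  proof (rule gauss_dom[OF b t2, where K=K and b="b + \<bar>y\<bar>"])
    show "continuous_on {0<..} (ker \<beta> t p y)" unfolding ker_def
      by (intro continuous_intros) auto
    fix u :: real assume u: "u > 0"
    have e: "- u * y - u^2/2*t \<le> \<bar>y\<bar> * u - t/2 * u^2"
    proof -
      have "- u * y \<le> \<bar>y\<bar> * u" using u by (metis abs_ge_minus_self mult.commute mult_minus_left mult_right_mono less_imp_le)
      moreover have "u^2/2*t = t/2 * u^2" by simp
      ultimately show ?thesis by linarith
    qed
    have "\<bar>ker \<beta> t p y u\<bar> = u powr (\<beta>-1) * (\<bar>poly p (y + t*u)\<bar> * exp (- u * y - u^2/2*t))"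
      unfolding ker_def using u by (simp add: abs_mult)
    also have "\<dots> \<le> u powr (\<beta>-1) * ((K * exp (b*u)) * exp (\<bar>y\<bar> * u - t/2 * u^2))"
      using Kb(3)[of y u] u e by (intro mult_left_mono mult_mono) auto
    also have "\<dots> = K * (u powr (\<beta> - 1) * exp ((b + \<bar>y\<bar>) * u - t/2 * u^2))"
      by (simp add: exp_add[symmetric] algebra_simps)
    finally show "\<bar>ker \<beta> t p y u\<bar> \<le> K * (u powr (\<beta> - 1) * exp ((b + \<bar>y\<bar>) * u - t/2 * u^2))" .
  qed
qed

lemma ker_integrable: "\<beta> > 0 \<Longrightarrow> t > 0 \<Longrightarrow> ker \<beta> t p y integrable_on {0<..}"
  using ker_int[where \<beta>=\<beta> and t=t and p=p and y=y] set_lebesgue_integral_eq_integral(1) by blast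

lemma ker_has_deriv:
  fixes \<beta> t y u :: real and p :: "real poly"
  assumes u: "u > 0"
  shows "((\<lambda>y. ker \<beta> t p y u) has_real_derivative (ker \<beta> t (pderiv p) y u - ker (\<beta>+1) t p y u)) (at y)"
proof -
  have d1: "((\<lambda>y. poly p (y + t*u)) has_real_derivative poly (pderiv p) (y + t*u)) (at y)"
  proof -
    have "((\<lambda>y. poly p (y + t*u)) has_real_derivative poly (pderiv p) (y + t*u) * 1) (at y)"
      by (rule DERIV_chain2[OF poly_DERIV]) (auto intro!: derivative_eq_intros)
    thus ?thesis by simp
  qed
  have d2: "((\<lambda>y. exp (- u * y - u^2/2*t)) has_real_derivative exp (- u * y - u^2/2*t) * (- u)) (at y)"
    by (auto intro!: derivative_eq_intros)
  have "((\<lambda>y. u powr (\<beta>-1) * (poly p (y + t*u) * exp (- u * y - u^2/2*t))) has_real_derivative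
      u powr (\<beta>-1) * (poly (pderiv p) (y + t*u) * exp (- u * y - u^2/2*t) + exp (- u * y - u^2/2*t) * (- u) * poly p (y + t*u))) (at y)"
    by (rule DERIV_cmult[OF DERIV_mult[OF d1 d2]])
  moreover have "u powr (\<beta>-1) * (poly (pderiv p) (y + t*u) * exp (- u * y - u^2/2*t) + exp (- u * y - u^2/2*t) * (- u) * poly p (y + t*u))
      = ker \<beta> t (pderiv p) y u - ker (\<beta>+1) t p y u"
  proof -
    have "u powr (\<beta> + 1 - 1) = u powr ((\<beta>-1) + 1)" by simp
    also have "\<dots> = u powr (\<beta>-1) * u" using u by (simp only: powr_add powr_one_gt_zero_iff) simp
    finally have "u powr (\<beta> + 1 - 1) = u powr (\<beta>-1) * u" .
    thus ?thesis unfolding ker_def by (simp add: algebra_simps)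
  qed
  ultimately show ?thesis unfolding ker_def by simp
qed

lemma exp_bound_y:
  fixes x y u t :: real
  assumes y: "\<bar>y - x\<bar> \<le> 1" and u: "u > 0"
  shows "exp (- u * y - u^2/2*t) \<le> exp ((\<bar>x\<bar> + 1) * u - t/2 * u^2)"
proof -
  have "\<bar>y\<bar> \<le> \<bar>x\<bar> + 1" using y abs_triangle_ineq[of x "y - x"] by simp
  moreover have "- u * y \<le> \<bar>y\<bar> * u" using u by (metis abs_ge_minus_self mult.commute mult_minus_left mult_right_mono less_imp_le)
  ultimately have "- u * y \<le> (\<bar>x\<bar> + 1) * u" using u mult_right_mono[of "\<bar>y\<bar>" "\<bar>x\<bar> + 1" u] by linarith
  moreover have "u^2/2*t = t/2 * u^2" by simp
  ultimately have "- u * y - u^2/2*t \<le> (\<bar>x\<bar> + 1) * u - t/2 * u^2" by linarith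
  thus ?thesis by simp
qed

lemma ker_deriv_integral:
  fixes \<beta> t x :: real and p :: "real poly"
  assumes b: "\<beta> > 0" and t: "t > 0"
  shows "((\<lambda>y. integral {0<..} (ker \<beta> t p y)) has_real_derivative
           integral {0<..} (\<lambda>u. ker \<beta> t (pderiv p) x u - ker (\<beta>+1) t p x u)) (at x)"
proof -
  obtain K1 b1 where K1: "K1 \<ge> 0" "b1 \<ge> 0" "\<And>y u. \<bar>y - x\<bar> \<le> 1 \<Longrightarrow> u > 0 \<Longrightarrow> \<bar>poly (pderiv p) (y + t*u)\<bar> \<le> K1 * exp (b1*u)"
    using ker_bound[OF t, of x "pderiv p"] by blast
  obtain K2 b2 where K2: "K2 \<ge> 0" "b2 \<ge> 0" "\<And>y u. \<bar>y - x\<bar> \<le> 1 \<Longrightarrow> u > 0 \<Longrightarrow> \<bar>poly p (y + t*u)\<bar> \<le> K2 * exp (b2*u)"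
    using ker_bound[OF t, of x p] by blast
  define c where "c = b1 + b2 + 1 + (\<bar>x\<bar> + 1)"
  define B where "B u = (K1 + K2) * (u powr (\<beta>-1) * exp (c * u - t/2 * u^2))" for u
  have t2: "t/2 > 0" using t by simp
  show ?thesis
  proof (rule deriv_under_integral[where B=B and f="\<lambda>y. ker \<beta> t p y" and f'="\<lambda>y u. ker \<beta> t (pderiv p) y u - ker (\<beta>+1) t p y u"])
    show "ker \<beta> t p y integrable_on {0<..}" for y by (rule ker_integrable[OF b t])
    show "((\<lambda>y. ker \<beta> t p y u) has_real_derivative ker \<beta> t (pderiv p) y u - ker (\<beta>+1) t p y u) (at y)"
      if "u \<in> {0<..}" for u y using that by (intro ker_has_deriv) auto
    have "B absolutely_integrable_on {0<..}"
    proof (rule gauss_dom[OF b t2, where K="K1+K2" and b=c])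
      show "continuous_on {0<..} B" unfolding B_def by (intro continuous_intros) auto
      fix u :: real assume u: "u > 0"
      show "\<bar>B u\<bar> \<le> (K1 + K2) * (u powr (\<beta> - 1) * exp (c * u - t/2 * u^2))"
        unfolding B_def using K1 K2 by simp
    qed
    thus "B integrable_on {0<..}" using set_lebesgue_integral_eq_integral(1) by blast
    fix u y :: real assume u: "u \<in> {0<..}" and y: "\<bar>y - x\<bar> \<le> 1"
    have u0: "u > 0" using u by simp
    define E where "E = exp (- u * y - u^2/2*t)"
    have E0: "E > 0" unfolding E_def by simp
    have EB: "E \<le> exp ((\<bar>x\<bar> + 1) * u - t/2 * u^2)" unfolding E_def by (rule exp_bound_y[OF y u0])
    have pw: "u powr (\<beta> + 1 - 1) = u powr (\<beta>-1) * u"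
    proof -
      have "u powr (\<beta> + 1 - 1) = u powr ((\<beta>-1) + 1)" by simp
      also have "\<dots> = u powr (\<beta>-1) * u" using u0 by (simp only: powr_add) simp
      finally show ?thesis .
    qed
    have ue: "u \<le> exp u" using exp_ge_add_one_self[of u] by linarith
    define P where "P = u powr (\<beta>-1)"
    have P0: "P \<ge> 0" unfolding P_def by simp
    have eq: "ker \<beta> t (pderiv p) y u - ker (\<beta>+1) t p y u = P * (poly (pderiv p) (y + t*u) - u * poly p (y + t*u)) * E"
      unfolding ker_def pw E_def P_def by (simp add: algebra_simps)
    have tri: "\<bar>poly (pderiv p) (y + t*u) - u * poly p (y + t*u)\<bar> \<le> \<bar>poly (pderiv p) (y + t*u)\<bar> + u * \<bar>poly p (y + t*u)\<bar>"
      using abs_triangle_ineq4[of "poly (pderiv p) (y + t*u)" "u * poly p (y + t*u)"] u0 by (simp add: abs_mult)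
    have "\<bar>ker \<beta> t (pderiv p) y u - ker (\<beta>+1) t p y u\<bar>
        = P * \<bar>poly (pderiv p) (y + t*u) - u * poly p (y + t*u)\<bar> * E"
      unfolding eq using P0 E0 by (simp add: abs_mult)
    also have "\<dots> \<le> u powr (\<beta>-1) * (\<bar>poly (pderiv p) (y + t*u)\<bar> + u * \<bar>poly p (y + t*u)\<bar>) * E"
      unfolding P_def[symmetric] using P0 E0 tri by (intro mult_right_mono mult_left_mono) auto
    also have "\<dots> \<le> u powr (\<beta>-1) * (K1 * exp (c*u - (\<bar>x\<bar> + 1) * u) + K2 * exp (c*u - (\<bar>x\<bar> + 1) * u)) * exp ((\<bar>x\<bar> + 1) * u - t/2 * u^2)"
    proof -
      have "K1 * exp (b1*u) \<le> K1 * exp (c*u - (\<bar>x\<bar> + 1) * u)"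
        using K1 K2 u0 by (intro mult_left_mono) (auto simp: c_def algebra_simps)
      hence h1: "\<bar>poly (pderiv p) (y + t*u)\<bar> \<le> K1 * exp (c*u - (\<bar>x\<bar> + 1) * u)" using K1(3)[OF y u0] by linarith
      have "u * \<bar>poly p (y + t*u)\<bar> \<le> exp u * (K2 * exp (b2*u))"
        using K2(3)[OF y u0] ue u0 by (intro mult_mono) auto
      also have "\<dots> = K2 * exp ((b2 + 1) * u)" by (simp add: exp_add[symmetric] algebra_simps)
      also have "\<dots> \<le> K2 * exp (c*u - (\<bar>x\<bar> + 1) * u)"
        using K1 K2 u0 by (intro mult_left_mono) (auto simp: c_def algebra_simps)
      finally have h2: "u * \<bar>poly p (y + t*u)\<bar> \<le> K2 * exp (c*u - (\<bar>x\<bar> + 1) * u)" .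
      have S: "\<bar>poly (pderiv p) (y + t*u)\<bar> + u * \<bar>poly p (y + t*u)\<bar> \<le> K1 * exp (c*u - (\<bar>x\<bar> + 1) * u) + K2 * exp (c*u - (\<bar>x\<bar> + 1) * u)"
        using add_mono[OF h1 h2] .
      have S2: "u powr (\<beta>-1) * (\<bar>poly (pderiv p) (y + t*u)\<bar> + u * \<bar>poly p (y + t*u)\<bar>) \<le> u powr (\<beta>-1) * (K1 * exp (c*u - (\<bar>x\<bar> + 1) * u) + K2 * exp (c*u - (\<bar>x\<bar> + 1) * u))"
        by (rule mult_left_mono[OF S]) simp
      show ?thesis
        by (rule mult_mono[OF S2 EB]) (use K1 K2 E0 in auto)
    qed
    also have "\<dots> = B u" unfolding B_def by (simp add: exp_add[symmetric] algebra_simps)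
    finally show "\<bar>ker \<beta> t (pderiv p) y u - ker (\<beta>+1) t p y u\<bar> \<le> B u" .
  qed
qed


lemma nonint_case:
  fixes \<beta> t :: real
  assumes b: "\<beta> > 0" and t: "t > 0"
  shows "calH (real j - \<beta>) x t = (-1)^j / Gamma \<beta> * integral {0<..} (ker \<beta> t (Epoly t j) x)"
proof (induction j arbitrary: x)
  case 0
  have G: "Gamma \<beta> > 0" using b by (simp add: Gamma_real_pos)
  have "integral {0<..} (\<lambda>u. u powr (\<beta>-1) * exp (- u * x - u^2 / 2 * t)) = Gamma \<beta> * calH (-\<beta>) x t"
    by (rule neg_case(2)[OF b t])
  moreover have "ker \<beta> t (Epoly t 0) x = (\<lambda>u. u powr (\<beta>-1) * exp (- u * x - u^2 / 2 * t))"
    unfolding ker_def by simp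
  ultimately show ?case using G by simp
next
  case (Suc j)
  define c where "c = (-1)^j / Gamma \<beta>"
  define p where "p = Epoly t j"
  define F where "F y = integral {0<..} (ker \<beta> t p y)" for y
  define D where "D = integral {0<..} (\<lambda>u. ker \<beta> t (pderiv p) x u - ker (\<beta>+1) t p x u)"
  have b1: "\<beta> + 1 > 0" using b by simp
  have fe: "(\<lambda>y. calH (real j - \<beta>) y t) = (\<lambda>y. c * F y)"
    using Suc.IH unfolding c_def F_def p_def by blast
  have dF: "(F has_real_derivative D) (at x)"
    unfolding F_def D_def by (rule ker_deriv_integral[OF b t])
  have dd: "deriv (\<lambda>y. calH (real j - \<beta>) y t) x = c * D"
    unfolding fe by (rule DERIV_imp_deriv, rule DERIV_cmult[OF dF])
  have rec: "calH (real (Suc j) - \<beta>) x t = x * calH (real (Suc j) - \<beta> - 1) x t - t * deriv (\<lambda>y. calH (real (Suc j) - \<beta> - 1) y t) x"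
    by (rule calH_rec[OF t])
  have e1: "real (Suc j) - \<beta> - 1 = real j - \<beta>" by simp
  have key: "x * F x - t * D = - integral {0<..} (ker \<beta> t (Epoly t (Suc j)) x)"
  proof -
    have i1: "(\<lambda>u. x * ker \<beta> t p x u) integrable_on {0<..}"
      by (intro integrable_on_mult_right ker_integrable[OF b t])
    have i2: "(\<lambda>u. t * (ker \<beta> t (pderiv p) x u - ker (\<beta>+1) t p x u)) integrable_on {0<..}"
      by (intro integrable_on_mult_right integrable_diff ker_integrable[OF b t] ker_integrable[OF b1 t])
    have "x * F x - t * D = integral {0<..} (\<lambda>u. x * ker \<beta> t p x u - t * (ker \<beta> t (pderiv p) x u - ker (\<beta>+1) t p x u))"
      unfolding F_def D_def by (simp add: integral_diff[OF i1 i2])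
    also have "\<dots> = integral {0<..} (\<lambda>u. - ker \<beta> t (Epoly t (Suc j)) x u)"
    proof (rule integral_cong)
      fix u :: real assume "u \<in> {0<..}"
      hence u: "u > 0" by simp
      have pw: "u powr (\<beta> + 1 - 1) = u powr (\<beta>-1) * u"
      proof -
        have "u powr (\<beta> + 1 - 1) = u powr ((\<beta>-1) + 1)" by simp
        also have "\<dots> = u powr (\<beta>-1) * u" using u by (simp only: powr_add) simp
        finally show ?thesis .
      qed
      show "x * ker \<beta> t p x u - t * (ker \<beta> t (pderiv p) x u - ker (\<beta>+1) t p x u) = - ker \<beta> t (Epoly t (Suc j)) x u"
        unfolding ker_def pw p_def by (simp add: algebra_simps)
    qed
    also have "\<dots> = - integral {0<..} (ker \<beta> t (Epoly t (Suc j)) x)"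
      by (simp add: integral_neg)
    finally show ?thesis .
  qed
  have "calH (real (Suc j) - \<beta>) x t = c * (x * F x - t * D)"
    unfolding rec e1 dd using Suc.IH[of x] unfolding c_def F_def p_def by (simp add: algebra_simps)
  also have "\<dots> = (-1)^(Suc j) / Gamma \<beta> * integral {0<..} (ker \<beta> t (Epoly t (Suc j)) x)"
    unfolding key c_def by simp
  finally show ?case .
qed

lemma LBINT_eq_integral:
  fixes f :: "real \<Rightarrow> real"
  assumes ai: "f absolutely_integrable_on {0<..}" and m: "f \<in> borel_measurable borel"
  shows "(LBINT u:{0<..}. f u) = integral {0<..} f"
proof -
  have "set_integrable lborel {0<..} f"
    unfolding set_integrable_def
  proof -
    have mm: "(\<lambda>u. indicator {0<..} u *\<^sub>R f u) \<in> borel_measurable lborel" using m by measurable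
    have "integrable lebesgue (\<lambda>u. indicator {0<..} u *\<^sub>R f u)"
      using ai unfolding set_integrable_def .
    thus "integrable lborel (\<lambda>u. indicator {0<..} u *\<^sub>R f u)"
      using integrable_completion[OF mm] by simp
  qed
  thus ?thesis by (rule set_borel_integral_eq_integral(2))
qed


lemma poly_meas: "(\<lambda>u. poly p (x + t*u)) \<in> borel_measurable borel" for p :: "real poly"
  by (rule borel_measurable_continuous_onI) (intro continuous_intros)

lemma ker_meas: "ker \<beta> t p x \<in> borel_measurable borel"
proof -
  have [measurable]: "(\<lambda>u. poly p (x + t*u)) \<in> borel_measurable borel" by (rule poly_meas)
  show ?thesis unfolding ker_def by measurable
qed

theorem theorem3:
  fixes \<alpha> t x :: real
  assumes "t > 0"
  shows "calH \<alpha> x t = appell_W_pow \<alpha> t x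
       \<and> appell_W_pow \<alpha> t x = inv_laplace_pow_pair \<alpha> (\<lambda>u. exp (- u * x - u^2 / 2 * t))"
proof -
  note t = assms
  define \<phi> where "\<phi> = (\<lambda>u::real. exp (- u * x - u^2 / 2 * t))"
  have main: "calH \<alpha> x t = inv_laplace_pow_pair \<alpha> \<phi>"
  proof (cases "\<alpha> < 0")
    case True
    have s: "-\<alpha> > 0" using True by simp
    have G: "Gamma (-\<alpha>) > 0" using s by (simp add: Gamma_real_pos)
    have ai: "(\<lambda>u. u powr (-\<alpha>-1) * exp (- u * x - u^2 / 2 * t)) absolutely_integrable_on {0<..}"
      by (rule neg_case(1)[OF s t])
    have iv: "integral {0<..} (\<lambda>u. u powr (-\<alpha>-1) * exp (- u * x - u^2 / 2 * t)) = Gamma (-\<alpha>) * calH (- (-\<alpha>)) x t"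
      by (rule neg_case(2)[OF s t])
    have m: "(\<lambda>u. u powr (-\<alpha>-1) * exp (- u * x - u^2 / 2 * t)) \<in> borel_measurable borel" by measurable
    have "inv_laplace_pow_pair \<alpha> \<phi> = (LBINT u:{0<..}. u powr (-\<alpha>-1) * exp (- u * x - u^2 / 2 * t)) / Gamma (-\<alpha>)"
      unfolding inv_laplace_pow_pair_def \<phi>_def using True by simp
    also have "\<dots> = calH \<alpha> x t"
      unfolding LBINT_eq_integral[OF ai m] iv using G by simp
    finally show ?thesis ..
  next
    case False
    show ?thesis
    proof (cases "\<alpha> \<in> \<nat>")
      case True
      then obtain n where n: "\<alpha> = real n" using Nats_cases by blast
      have "inv_laplace_pow_pair \<alpha> \<phi> = (-1)^n * (deriv ^^ n) \<phi> 0"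
        unfolding inv_laplace_pow_pair_def using False True n by simp
      also have "\<dots> = (-1)^n * poly (Epoly t n) x"
        unfolding \<phi>_def deriv_phi by simp
      also have "\<dots> = calH \<alpha> x t" unfolding n int_case[OF t] ..
      finally show ?thesis ..
    next
      case nN: False
      define n where "n = nat \<lceil>\<alpha>\<rceil>"
      define \<beta> where "\<beta> = real n - \<alpha>"
      have a0: "\<alpha> \<ge> 0" using False by simp
      have rn: "real n = real_of_int \<lceil>\<alpha>\<rceil>" unfolding n_def using a0 by simp
      have b: "\<beta> > 0"
      proof -
        have "real_of_int \<lceil>\<alpha>\<rceil> \<noteq> \<alpha>"
        proof
          assume h: "real_of_int \<lceil>\<alpha>\<rceil> = \<alpha>"
          have "real (nat \<lceil>\<alpha>\<rceil>) = real_of_int \<lceil>\<alpha>\<rceil>" using rn unfolding n_def .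
          hence "\<alpha> = real (nat \<lceil>\<alpha>\<rceil>)" using h by simp
          thus False using nN by (metis of_nat_in_Nats)
        qed
        moreover have "real_of_int \<lceil>\<alpha>\<rceil> \<ge> \<alpha>" by simp
        ultimately show ?thesis unfolding \<beta>_def rn by linarith
      qed
      have fe: "(\<lambda>u. u powr (real n - \<alpha> - 1) * (deriv ^^ n) \<phi> u) = ker \<beta> t (Epoly t n) x"
        unfolding \<phi>_def deriv_phi ker_def \<beta>_def by (simp add: mult_ac)
      have "inv_laplace_pow_pair \<alpha> \<phi> = (-1)^n / Gamma (real n - \<alpha>) * (LBINT u:{0<..}. u powr (real n - \<alpha> - 1) * (deriv ^^ n) \<phi> u)"
        unfolding inv_laplace_pow_pair_def using False nN by (simp add: n_def Let_def)
      also have "\<dots> = (-1)^n / Gamma \<beta> * integral {0<..} (ker \<beta> t (Epoly t n) x)"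
      proof -
        have "real n - \<alpha> = \<beta>" unfolding \<beta>_def ..
        thus ?thesis unfolding fe using LBINT_eq_integral[OF ker_int[OF b t] ker_meas, of "Epoly t n" x] by simp
      qed
      also have "\<dots> = calH (real n - \<beta>) x t" by (rule nonint_case[OF b t, symmetric])
      also have "real n - \<beta> = \<alpha>" unfolding \<beta>_def by simp
      finally show ?thesis ..
    qed
  qed
  show ?thesis unfolding appell_W_pow_def main \<phi>_def by simp
qed


end
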